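(* Let $\tau_0,\tau_1,\tau_2>0$, let $0<\alpha\le 1$, and let $a\in\mathcal{B}_\alpha$. Let $A=\mathrm{CC}(a)$ and $B=e_n$. Then $$\sum_{k=0}^{\infty}\|\alpha^{-k}A^kB\|^2\le 2\pi n\,\alpha^{-2n}/\tau_1^2,$$ and for every $k\ge0$, $$\|A^kB\|^2\le\min\left\{2\pi n/\tau_1^2,\ 2\pi n\,\alpha^{2k-2n}/\tau_1^2\right\}.$$
   Context: $\mathcal{C}=\{z\in\mathbb{C}:\Re z\ge(1+\tau_0)|\Im z|\}\cap\{z\in\mathbb{C}:\tau_1<\Re z<\tau_2\}$; for $a=(a_1,\dots,a_n)\in\mathbb{R}^n$, $p_a(z)=z^n+a_1z^{n-1}+\dots+a_n$; $\mathcal{B}_\alpha=\{a\in\mathbb{R}^n:\ p_a(z)/z^n\in\mathcal{C}\text{ for all } |z|=\alpha\}$. $\mathrm{CC}(a)$ is the $n\times n$ companion matrix with ones on the superdiagonal, zeros elsewhere in the first $n-1$ rows, and last row $[-a_n,\dots,-a_1]$; $e_n$ is the $n$-th standard basis vector; $\|\cdot\|$ is the Euclidean norm. *)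

theory Defs
  imports Complex_Main "Jordan_Normal_Form.Matrix"
begin

definition regionC :: "real \<Rightarrow> real \<Rightarrow> real \<Rightarrow> complex set" where
  "regionC \<tau>0 \<tau>1 \<tau>2 = {z. Re z \<ge> (1 + \<tau>0) * \<bar>Im z\<bar>} \<inter> {z. \<tau>1 < Re z \<and> Re z < \<tau>2}"

text \<open>a = (a_1,...,a_n) is stored as a vector of dimension n with a_k = a $ (k-1).
  p_a(z) = z^n + a_1 z^(n-1) + ... + a_n.\<close>
definition char_poly_a :: "real vec \<Rightarrow> complex \<Rightarrow> complex" where
  "char_poly_a a z = z ^ dim_vec a + (\<Sum>k\<in>{1..dim_vec a}. complex_of_real (a $ (k - 1)) * z ^ (dim_vec a - k))"

definition B_alpha :: "real \<Rightarrow> real \<Rightarrow> real \<Rightarrow> nat \<Rightarrow> real \<Rightarrow> real vec set" where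
  "B_alpha \<tau>0 \<tau>1 \<tau>2 n \<alpha> = {a. dim_vec a = n \<and>
     (\<forall>z. cmod z = \<alpha> \<longrightarrow> char_poly_a a z / z ^ n \<in> regionC \<tau>0 \<tau>1 \<tau>2)}"

text \<open>Companion matrix: ones on the superdiagonal in the first n-1 rows,
  last row [-a_n, ..., -a_1] (0-based column j carries -a_(n-j)).\<close>
definition CC :: "real vec \<Rightarrow> real mat" where
  "CC a = (let n = dim_vec a in mat n n (\<lambda>(i, j).
      if i < n - 1 then (if j = i + 1 then 1 else 0) else - (a $ (n - 1 - j))))"

definition sqnorm :: "real vec \<Rightarrow> real" where
  "sqnorm v = (\<Sum>i<dim_vec v. (v $ i)\<^sup>2)"

end

theory Submission
  imports Defs "HOL-Complex_Analysis.Complex_Analysis"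
begin

hide_type (open) Finite_Cartesian_Product.vec
hide_const (open) Finite_Cartesian_Product.vec Finite_Cartesian_Product.mat Finite_Cartesian_Product.row
  Finite_Cartesian_Product.column
no_notation Finite_Cartesian_Product.vec_nth (infixl "$" 90)
no_notation Formal_Power_Series.fps_nth (infixl "$" 75)

lemma cis_ne_1:
  fixes m l N :: nat
  assumes "m < N" "l < N" "m \<noteq> l"
  shows "cis (2 * pi * (real m - real l) / real N) \<noteq> 1"
proof
  assume h: "cis (2 * pi * (real m - real l) / real N) = 1"
  then obtain k :: int where k: "2 * pi * (real m - real l) / real N = real_of_int (2 * k) * pi"
    by (auto simp: cis_conv_exp exp_eq_1)
  have N0: "real N > 0" using assms by simp
  have "2*pi*(real m - real l) = 2*pi*(real N * of_int k)"
    using k N0 by (simp add: field_simps)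
  hence "real m - real l = real N * of_int k" using pi_gt_zero by simp
  hence "int m - int l = int N * k" by (metis of_int_eq_iff of_int_mult of_int_of_nat_eq of_int_diff)
  moreover have "\<bar>int m - int l\<bar> < int N" using assms by auto
  ultimately have "k = 0"
  proof (cases "k = 0")
    case False
    then have "1 \<le> \<bar>k\<bar>" by linarith
    then have "int N \<le> int N * \<bar>k\<bar>" by (simp add: mult_le_cancel_left1)
    moreover assume "int m - int l = int N * k" "\<bar>int m - int l\<bar> < int N"
    ultimately show ?thesis by (simp add: abs_mult)
  qed
  then show False using \<open>int m - int l = int N * k\<close> assms by simp
qed

lemma roots_orth:
  fixes m l N :: nat
  assumes "m < N" "l < N"
  shows "(\<Sum>j<N. cis (2*pi*real j*real m/real N) * cnj (cis (2*pi*real j*real l/real N)))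
         = (if m = l then of_nat N else 0)"
proof -
  define z where "z = cis (2 * pi * (real m - real l) / real N)"
  have N0: "real N > 0" using assms by simp
  have eq: "cis (2*pi*real j*real m/real N) * cnj (cis (2*pi*real j*real l/real N)) = z ^ j" for j
  proof -
    have "cis (2*pi*real j*real m/real N) * cnj (cis (2*pi*real j*real l/real N))
       = cis (2*pi*real j*real m/real N + - (2*pi*real j*real l/real N))" by (simp only: cis_cnj cis_mult)
    also have "2*pi*real j*real m/real N + - (2*pi*real j*real l/real N) = real j * (2 * pi * (real m - real l) / real N)"
      by (simp add: diff_divide_distrib right_diff_distrib mult.assoc mult.left_commute)
    also have "cis (real j * (2 * pi * (real m - real l) / real N)) = z ^ j" by (simp only: z_def Complex.DeMoivre)
    finally show ?thesis .
  qed
  have zN: "z ^ N = 1"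
  proof -
    have "z ^ N = cis (real N * (2 * pi * (real m - real l) / real N))" by (simp only: z_def Complex.DeMoivre)
    also have "real N * (2 * pi * (real m - real l) / real N) = 2 * pi * (real m - real l)" using N0 by simp
    also have "cis (2 * pi * (real m - real l)) = 1" using cis_multiple_2pi[of "real m - real l"]
      by (metis Ints_diff Ints_of_nat)
    finally show ?thesis .
  qed
  have S: "(\<Sum>j<N. cis (2*pi*real j*real m/real N) * cnj (cis (2*pi*real j*real l/real N)))
      = (\<Sum>j<N. z ^ j)" by (rule sum.cong[OF refl]) (rule eq)
  show ?thesis
  proof (cases "m = l")
    case True
    then have "z = 1" by (simp add: z_def)
    then have h: "(\<Sum>j<N. z^j) = of_nat N" by simp
    show ?thesis by (subst S, subst h) (simp add: True)
  next
    case False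
    then have "z \<noteq> 1" unfolding z_def by (rule cis_ne_1[OF assms])
    have "(\<Sum>j<N. z^j) = 0" using \<open>z \<noteq> 1\<close> zN by (simp add: sum_gp_strict)
    then show ?thesis by (subst S) (simp add: False)
  qed
qed

lemma dft_parseval:
  fixes b :: "nat \<Rightarrow> complex" and N :: nat
  assumes "N > 0"
  shows "(\<Sum>j<N. (cmod (\<Sum>m<N. b m * cis (2*pi*real j*real m/real N)))^2)
         = real N * (\<Sum>m<N. (cmod (b m))^2)"
proof -
  define w where "w j m = cis (2*pi*real j*real m/real N)" for j m
  have "complex_of_real (\<Sum>j<N. (cmod (\<Sum>m<N. b m * w j m))^2)
      = (\<Sum>j<N. (\<Sum>m<N. b m * w j m) * cnj (\<Sum>l<N. b l * w j l))"
    by (simp only: of_real_sum complex_norm_square)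
  also have "\<dots> = (\<Sum>j<N. \<Sum>m<N. \<Sum>l<N. b m * cnj (b l) * (w j m * cnj (w j l)))"
    apply (intro sum.cong refl)
    apply (simp only: cnj_sum complex_cnj_mult sum_product)
    apply (intro sum.cong refl)
    by (simp add: mult.commute mult.left_commute)
  also have "\<dots> = (\<Sum>m<N. \<Sum>j<N. \<Sum>l<N. b m * cnj (b l) * (w j m * cnj (w j l)))"
    by (rule sum.swap[where g="\<lambda>j m. (\<Sum>l<N. b m * cnj (b l) * (w j m * cnj (w j l)))"])
  also have "\<dots> = (\<Sum>m<N. \<Sum>l<N. \<Sum>j<N. b m * cnj (b l) * (w j m * cnj (w j l)))"
    by (rule sum.cong[OF refl], rule sum.swap)
  also have "\<dots> = (\<Sum>m<N. \<Sum>l<N. b m * cnj (b l) * (\<Sum>j<N. w j m * cnj (w j l)))"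
    by (simp only: sum_distrib_left)
  also have "\<dots> = (\<Sum>m<N. \<Sum>l<N. b m * cnj (b l) * (if m = l then of_nat N else 0))"
    by (intro sum.cong refl) (simp add: w_def roots_orth)
  also have "\<dots> = (\<Sum>m<N. b m * cnj (b m) * of_nat N)"
    by (simp add: if_distrib sum.delta cong: if_cong)
  also have "\<dots> = complex_of_real (real N * (\<Sum>m<N. (cmod (b m))^2))"
    by (simp only: of_real_mult of_real_sum sum_distrib_left complex_norm_square of_real_of_nat_eq mult_ac)
  finally show ?thesis unfolding w_def using of_real_eq_iff by blast
qed

lemma CC_carrier: "CC a \<in> carrier_mat (dim_vec a) (dim_vec a)"
  by (simp add: CC_def Let_def)

lemma CC_mult_lt:
  assumes "dim_vec w = dim_vec a" "i < dim_vec a - 1"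
  shows "(CC a *\<^sub>v w) $ i = w $ (i+1)"
proof -
  let ?n = "dim_vec a"
  have "(CC a *\<^sub>v w) $ i = (\<Sum>j = 0..<?n. (if j = i + 1 then 1 else 0) * w $ j)"
    using assms by (simp add: CC_def Let_def scalar_prod_def)
  also have "\<dots> = (\<Sum>j = 0..<?n. (if j = i + 1 then w $ j else 0))"
    by (intro sum.cong) auto
  also have "\<dots> = w $ (i+1)" using assms by (simp add: sum.delta')
  finally show ?thesis .
qed

lemma CC_mult_last:
  assumes "dim_vec w = dim_vec a" "dim_vec a \<ge> 1"
  shows "(CC a *\<^sub>v w) $ (dim_vec a - 1) = - (\<Sum>j<dim_vec a. a $ (dim_vec a - 1 - j) * w $ j)"
proof -
  let ?n = "dim_vec a"
  have "(CC a *\<^sub>v w) $ (?n - 1) = (\<Sum>j = 0..<?n. (- a $ (?n - 1 - j)) * w $ j)"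
    using assms by (simp add: CC_def Let_def scalar_prod_def)
  also have "\<dots> = - (\<Sum>j<?n. a $ (?n - 1 - j) * w $ j)"
    by (simp add: sum_negf atLeast0LessThan)
  finally show ?thesis .
qed

lemma pow_mat_comm:
  assumes "A \<in> carrier_mat n n"
  shows "A ^\<^sub>m k * A = A * A ^\<^sub>m k"
proof (induction k)
  case 0
  then show ?case using assms by simp
next
  case (Suc k)
  have "A ^\<^sub>m Suc k * A = (A ^\<^sub>m k * A) * A" by simp
  also have "\<dots> = (A * A ^\<^sub>m k) * A" using Suc by simp
  also have "\<dots> = A * (A ^\<^sub>m k * A)" using assms by (simp add: assoc_mult_mat[of _ n n _ n _ n])
  also have "\<dots> = A * A ^\<^sub>m Suc k" by simp
  finally show ?case .
qed

lemma pow_step: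
  assumes "A \<in> carrier_mat n n" "w \<in> carrier_vec n"
  shows "(A ^\<^sub>m Suc k) *\<^sub>v w = A *\<^sub>v ((A ^\<^sub>m k) *\<^sub>v w)"
proof -
  have "(A ^\<^sub>m Suc k) *\<^sub>v w = (A * A ^\<^sub>m k) *\<^sub>v w" using pow_mat_comm[OF assms(1)] by simp
  also have "\<dots> = A *\<^sub>v ((A ^\<^sub>m k) *\<^sub>v w)" using assms by (simp add: assoc_mult_mat_vec[of _ n n _ n])
  finally show ?thesis .
qed

lemma seq_struct:
  fixes a :: "real vec" and v :: "nat \<Rightarrow> real vec" and s :: "nat \<Rightarrow> real" and n :: nat
  assumes n_def: "n = dim_vec a"
  assumes v_def: "\<And>k. v k = (CC a ^\<^sub>m k) *\<^sub>v unit_vec n (n - 1)"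
  assumes s_def: "\<And>m. s m = v m $ 0"
  assumes n1: "n \<ge> 1"
  shows "\<And>k. dim_vec (v k) = n"
    and "\<And>k i. i < n \<Longrightarrow> v k $ i = s (k + i)"
    and "\<And>j. j < n \<Longrightarrow> s j = (if j = n - 1 then 1 else 0)"
    and "\<And>k. s (k + n) = - (\<Sum>j<n. a $ (n - 1 - j) * s (k + j))"
proof -
  have A: "CC a \<in> carrier_mat n n" using CC_carrier n_def by simp
  show dv: "\<And>k. dim_vec (v k) = n" using A by (simp add: v_def)
  have vS: "\<And>k. v (Suc k) = CC a *\<^sub>v v k"
    unfolding v_def by (rule pow_step[OF A]) simp
  have shift: "v (Suc k) $ i = v k $ (i + 1)" if "i < n - 1" for k i
    using CC_mult_lt[of "v k" a i] dv that vS n_def by simp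
  have last: "v (Suc k) $ (n - 1) = - (\<Sum>j<n. a $ (n - 1 - j) * v k $ j)" for k
    using CC_mult_last[of "v k" a] dv vS n_def n1 by simp
  show idx: "\<And>k i. i < n \<Longrightarrow> v k $ i = s (k + i)"
  proof -
    fix k i assume "i < n"
    then show "v k $ i = s (k + i)"
    proof (induction i arbitrary: k)
      case 0 then show ?case by (simp add: s_def)
    next
      case (Suc i)
      have "v k $ Suc i = v (Suc k) $ i" using shift[of i k] Suc.prems by simp
      also have "\<dots> = s (Suc k + i)" using Suc by simp
      finally show ?case by simp
    qed
  qed
  show "\<And>j. j < n \<Longrightarrow> s j = (if j = n - 1 then 1 else 0)"
  proof -
    fix j assume "j < n"
    then have "s j = v 0 $ j" using idx[of j 0] by simp
    also have "\<dots> = (if j = n - 1 then 1 else 0)" using \<open>j < n\<close> n1 A by (simp add: v_def)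
    finally show "s j = (if j = n - 1 then 1 else 0)" .
  qed
  show "\<And>k. s (k + n) = - (\<Sum>j<n. a $ (n - 1 - j) * s (k + j))"
  proof -
    fix k
    have "s (k + n) = v (Suc k) $ (n - 1)" using idx[of "n-1" "Suc k"] n1 by simp
    also have "\<dots> = - (\<Sum>j<n. a $ (n - 1 - j) * s (k + j))"
      using last[of k] idx by simp
    finally show "s (k + n) = - (\<Sum>j<n. a $ (n - 1 - j) * s (k + j))" .
  qed
qed


lemma core:
  fixes c s :: "nat \<Rightarrow> real" and R \<tau> :: real and n :: nat
  assumes n1: "n \<ge> 1" and R: "R > 0" and tau: "\<tau> > 0"
    and hP: "\<And>w. cmod w = R \<Longrightarrow> \<tau> < Re (1 + (\<Sum>i=1..n. complex_of_real (c i) * w ^ i))"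
    and s0: "\<And>j. j < n \<Longrightarrow> s j = (if j = n - 1 then 1 else 0)"
    and srec: "\<And>k. s (k + n) = - (\<Sum>i=1..n. c i * s (k + n - i))"
  shows "summable (\<lambda>m. (s m * R^m)^2) \<and> (\<Sum>m. (s m * R^m)^2) \<le> (R^(n-1)/\<tau>)^2"
proof -
  define P :: "complex poly" where "P = 1 + (\<Sum>i\<in>{1..n}. monom (complex_of_real (c i)) i)"
  have polyP: "poly P w = 1 + (\<Sum>i=1..n. complex_of_real (c i) * w ^ i)" for w
    by (simp add: P_def poly_sum poly_monom)
  have ReP: "\<tau> \<le> Re (poly P \<xi>)" if "cmod \<xi> \<le> R" for \<xi>
  proof -
    have h1: "(\<lambda>w. - poly P w) holomorphic_on interior (cball 0 R)"
      by (intro holomorphic_intros)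
    have h2: "continuous_on (closure (cball 0 R)) (\<lambda>w. - poly P w)"
      by (intro continuous_intros)
    have h3: "Re (- poly P z) \<le> - \<tau>" if "z \<in> frontier (cball 0 R)" for z
      using that hP[of z] by (simp add: frontier_cball polyP)
    have "Re (- poly P \<xi>) \<le> - \<tau>"
      using maximum_real_frontier[OF h1 h2 _ h3, of \<xi>] that by simp
    then show ?thesis by simp
  qed
  have nz: "poly P w \<noteq> 0" if "cmod w \<le> R" for w
    using ReP[OF that] tau by auto
  have normP: "\<tau> \<le> cmod (poly P w)" if "cmod w \<le> R" for w
    using ReP[OF that] complex_Re_le_cmod order_trans by blast
  obtain R' where RR': "R < R'" and nz': "\<And>w. cmod w < R' \<Longrightarrow> poly P w \<noteq> 0"
  proof -
    have "P \<noteq> 0" using nz[of 0] R by auto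
    define Z where "Z = {w. poly P w = 0}"
    have finZ: "finite Z" unfolding Z_def using poly_roots_finite[OF \<open>P \<noteq> 0\<close>] .
    define R' where "R' = Min (insert (R + 1) (cmod ` Z))"
    have "R < R'" unfolding R'_def using finZ
    proof (subst Min_gr_iff)
      show "\<forall>a\<in>insert (R + 1) (cmod ` Z). R < a"
        using nz by (force simp: Z_def not_le)
    qed auto
    moreover have "poly P w \<noteq> 0" if "cmod w < R'" for w
    proof
      assume "poly P w = 0"
      then have "R' \<le> cmod w" unfolding R'_def using finZ by (intro Min_le) (auto simp: Z_def)
      then show False using that by simp
    qed
    ultimately show ?thesis using that by blast
  qed
  define Pf where "Pf = fps_of_poly P"
  define S where "S = Abs_fps (\<lambda>m. complex_of_real (s m))"
  have Pf_eq: "Pf = 1 + (\<Sum>i\<in>{1..n}. fps_const (complex_of_real (c i)) * fps_X ^ i)"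
    by (simp add: Pf_def P_def fps_of_poly_add fps_of_poly_sum fps_of_poly_monom)
  have Snth: "fps_nth S m = complex_of_real (s m)" for m by (simp add: S_def)
  have PS: "Pf * S = S + (\<Sum>i\<in>{1..n}. fps_const (complex_of_real (c i)) * (fps_X ^ i * S))"
    by (simp add: Pf_eq distrib_right sum_distrib_right mult.assoc)
  have prodnth: "fps_nth (Pf * S) m = complex_of_real (s m + (\<Sum>i=1..n. c i * (if m < i then 0 else s (m - i))))" for m
    unfolding PS by (simp add: fps_sum_nth fps_X_power_mult_nth Snth of_real_sum if_distrib cong: if_cong)
  have prod: "Pf * S = fps_X ^ (n - 1)"
  proof (rule fps_ext)
    fix m
    have "s m + (\<Sum>i=1..n. c i * (if m < i then 0 else s (m - i))) = (if m = n - 1 then 1 else 0)"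
    proof (cases "m < n")
      case True
      have "(\<Sum>i=1..n. c i * (if m < i then 0 else s (m - i))) = 0"
      proof (intro sum.neutral ballI)
        fix i assume "i \<in> {1..n}"
        then show "c i * (if m < i then 0 else s (m - i)) = 0" using True s0 by auto
      qed
      then show ?thesis using True s0 by simp
    next
      case False
      then obtain k where k: "m = k + n" by (metis add.commute le_Suc_ex not_less)
      have "(\<Sum>i=1..n. c i * (if m < i then 0 else s (m - i))) = (\<Sum>i=1..n. c i * s (k + n - i))"
        using k by (intro sum.cong) auto
      then show ?thesis using k srec[of k] n1 by simp
    qed
    then show "fps_nth (Pf * S) m = fps_nth (fps_X ^ (n - 1)) m"
      by (simp add: prodnth fps_X_power_nth)
  qed
  have Pf0: "fps_nth Pf 0 = 1"
    using polyP[of 0] by (simp add: Pf_def poly_0_coeff_0[symmetric])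
  have Seq: "S = fps_X ^ (n - 1) * inverse Pf"
  proof -
    have "S = (inverse Pf * Pf) * S" using Pf0 by (simp add: inverse_mult_eq_1)
    also have "\<dots> = fps_X ^ (n - 1) * inverse Pf" by (simp add: mult.assoc prod mult.commute)
    finally show ?thesis .
  qed
  have evPf: "eval_fps Pf w = poly P w" for w by (simp add: Pf_def)
  have radinv: "ereal R' \<le> fps_conv_radius (inverse Pf)"
    using fps_conv_radius_inverse[of "ereal R'" Pf] nz' by (simp add: evPf Pf_def)
  have radS: "ereal R' \<le> fps_conv_radius S"
    unfolding Seq using fps_conv_radius_mult[of "fps_X ^ (n - 1)" "inverse Pf"] radinv
    by (simp add: min_def split: if_splits)
  have evS: "eval_fps S w = w ^ (n - 1) * inverse (poly P w)" if "cmod w < R'" for w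
  proof -
    have "eval_fps S w = eval_fps (fps_X ^ (n - 1)) w * eval_fps (inverse Pf) w"
      unfolding Seq using less_le_trans[OF _ radinv, of "ereal (cmod w)"] that by (intro eval_fps_mult) auto
    also have "eval_fps (inverse Pf) w = inverse (eval_fps Pf w)"
      using that nz' by (intro eval_fps_inverse[where r="ereal R'"]) (auto simp: evPf Pf_def)
    finally show ?thesis by (simp add: evPf)
  qed
  have sumS: "(\<lambda>m. complex_of_real (s m) * w ^ m) sums eval_fps S w" if "cmod w < R'" for w
    using sums_eval_fps[of w S] that less_le_trans[OF _ radS, of "ereal (cmod w)"] by (simp add: Snth)
  have RS: "ereal R < fps_conv_radius S" using less_le_trans[OF _ radS, of "ereal R"] RR' by simp
  have absS: "summable (\<lambda>m. \<bar>s m\<bar> * R^m)"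
    using norm_summable_fps[of "complex_of_real R" S] RS R
    by (simp add: Snth norm_mult norm_power)
  define K where "K = R^(n-1)/\<tau>"
  have K0: "K \<ge> 0" using R tau by (simp add: K_def)
  have bnd: "cmod (eval_fps S w) \<le> K" if "cmod w = R" for w
  proof -
    have "cmod (eval_fps S w) = R^(n-1) / cmod (poly P w)"
      using evS[of w] that RR' by (simp add: norm_mult norm_power norm_inverse divide_inverse)
    also have "\<dots> \<le> R^(n-1) / \<tau>"
      using normP[of w] that tau R by (intro divide_left_mono) (auto intro!: mult_pos_pos)
    finally show ?thesis by (simp add: K_def)
  qed
  define b where "b m = s m * R^m" for m
  define T where "T N = (\<Sum>k. \<bar>s (k+N)\<bar> * R^(k+N))" for N
  have Tsum: "summable (\<lambda>k. \<bar>s (k+N)\<bar> * R^(k+N))" for N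
    using summable_ignore_initial_segment[OF absS, of N] by simp
  have Tnn: "T N \<ge> 0" for N
    unfolding T_def using R by (intro suminf_nonneg Tsum) auto
  have Tle: "T N \<le> T 0" for N
  proof -
    have "T 0 = (\<Sum>m. \<bar>s m\<bar> * R^m)" by (simp add: T_def)
    also have "\<dots> = T N + (\<Sum>m<N. \<bar>s m\<bar> * R^m)"
      unfolding T_def by (rule suminf_split_initial_segment[OF absS])
    also have "\<dots> \<ge> T N" using R by (simp add: sum_nonneg)
    finally show ?thesis .
  qed
  have fin: "(\<Sum>m<N. (b m)^2) \<le> (K + T N)^2" if N0: "N > 0" for N
  proof -
    define z where "z j = complex_of_real R * cis (2*pi*real j/real N)" for j
    have zR: "cmod (z j) = R" for j using R by (simp add: z_def norm_mult)
    have zpow: "z j ^ m = complex_of_real (R^m) * cis (2*pi*real j*real m/real N)" for j m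
    proof -
      have "z j ^ m = complex_of_real (R^m) * cis (real m * (2*pi*real j/real N))"
        by (simp add: z_def power_mult_distrib Complex.DeMoivre)
      also have "real m * (2*pi*real j/real N) = 2*pi*real j*real m/real N" by simp
      finally show ?thesis .
    qed
    define Q where "Q j = (\<Sum>m<N. complex_of_real (b m) * cis (2*pi*real j*real m/real N))" for j
    have Qeq: "Q j = (\<Sum>m<N. complex_of_real (s m) * z j ^ m)" for j
      unfolding Q_def zpow b_def by (simp add: mult.assoc)
    have Qb: "cmod (Q j) \<le> K + T N" for j
    proof -
      have zl: "cmod (z j) < R'" using zR RR' by simp
      have summ: "summable (\<lambda>m. complex_of_real (s m) * z j ^ m)"
        using sumS[OF zl] by (rule sums_summable)
      have nt: "norm (complex_of_real (s (k+N)) * z j ^ (k+N)) = \<bar>s (k+N)\<bar> * R^(k+N)" for k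
        by (simp add: norm_mult norm_power zR)
      have split: "eval_fps S (z j) = (\<Sum>k. complex_of_real (s (k+N)) * z j ^ (k+N)) + Q j"
        unfolding Qeq using suminf_split_initial_segment[OF summ, of N] sums_unique[OF sumS[OF zl]] by simp
      have tl: "cmod (\<Sum>k. complex_of_real (s (k+N)) * z j ^ (k+N)) \<le> T N"
        unfolding T_def nt[symmetric] by (rule summable_norm) (simp add: nt Tsum)
      have "cmod (Q j) \<le> cmod (eval_fps S (z j)) + cmod (\<Sum>k. complex_of_real (s (k+N)) * z j ^ (k+N))"
        using split norm_triangle_ineq4[of "eval_fps S (z j)" "\<Sum>k. complex_of_real (s (k+N)) * z j ^ (k+N)"]
        by (simp add: algebra_simps)
      then show ?thesis using bnd[OF zR[of j]] tl by linarith
    qed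
    have "real N * (\<Sum>m<N. (b m)^2) = (\<Sum>j<N. (cmod (Q j))^2)"
      using dft_parseval[OF N0, of "\<lambda>m. complex_of_real (b m)"] by (simp add: Q_def)
    also have "\<dots> \<le> (\<Sum>j<N. (K + T N)^2)"
      by (intro sum_mono power_mono Qb) simp
    also have "\<dots> = real N * (K + T N)^2" by simp
    finally show ?thesis using N0 by simp
  qed
  have summ2: "summable (\<lambda>m. (b m)^2)"
  proof (rule summableI_nonneg_bounded[where x="(K + T 0)^2"])
    fix N
    show "(\<Sum>m<N. (b m)^2) \<le> (K + T 0)^2"
    proof (cases "N = 0")
      case True then show ?thesis by simp
    next
      case False
      then have "(\<Sum>m<N. (b m)^2) \<le> (K + T N)^2" using fin by simp
      also have "\<dots> \<le> (K + T 0)^2" using Tle Tnn K0 by (intro power_mono) auto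
      finally show ?thesis .
    qed
  qed simp
  have lim1: "(\<lambda>N. \<Sum>m<N. (b m)^2) \<longlonglongrightarrow> (\<Sum>m. (b m)^2)"
    using summ2 by (rule summable_LIMSEQ)
  have T0: "T \<longlonglongrightarrow> 0" unfolding T_def using suminf_exist_split2[OF absS] by simp
  have lim2: "(\<lambda>N. (K + T N)^2) \<longlonglongrightarrow> (K + 0)^2"
    by (intro tendsto_intros T0)
  have "(\<Sum>m. (b m)^2) \<le> (K + 0)^2"
    using lim1 lim2 fin by (intro LIMSEQ_le[OF lim1 lim2]) (auto intro: exI[of _ 1])
  then show ?thesis using summ2 by (simp add: b_def K_def)
qed
lemma hyp_translate:
  assumes a: "a \<in> B_alpha \<tau>0 \<tau>1 \<tau>2 n \<alpha>" and al: "0 < \<alpha>" and w: "cmod w = inverse \<alpha>"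
  shows "\<tau>1 < Re (1 + (\<Sum>i=1..n. complex_of_real (a $ (i-1)) * w ^ i))"
proof -
  have dn: "dim_vec a = n" using a by (simp add: B_alpha_def)
  define z where "z = inverse w"
  have w0: "w \<noteq> 0" using w al by auto
  have zw: "z * w = 1" using w0 by (simp add: z_def)
  have cz: "cmod z = \<alpha>" using w al by (simp add: z_def norm_inverse)
  have inr: "char_poly_a a z / z ^ n \<in> regionC \<tau>0 \<tau>1 \<tau>2"
    using a cz by (simp add: B_alpha_def)
  have pw: "z ^ (n - k) / z ^ n = w ^ k" if "k \<le> n" for k
  proof -
    have "z ^ (n - k) / z ^ n = z ^ (n - k) * w ^ n" by (simp add: z_def divide_inverse power_inverse)
    also have "w ^ n = w ^ (n - k) * w ^ k" using that by (simp add: power_add[symmetric])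
    also have "z ^ (n - k) * (w ^ (n - k) * w ^ k) = (z * w) ^ (n - k) * w ^ k"
      by (simp add: power_mult_distrib mult.assoc)
    finally show ?thesis using zw by simp
  qed
  have z0: "z \<noteq> 0" using w0 by (simp add: z_def)
  have "char_poly_a a z / z ^ n = 1 + (\<Sum>i=1..n. complex_of_real (a $ (i-1)) * w ^ i)"
  proof -
    have "char_poly_a a z / z ^ n = z ^ n / z ^ n + (\<Sum>k=1..n. complex_of_real (a $ (k - 1)) * (z ^ (n - k) / z ^ n))"
      by (simp add: char_poly_a_def dn add_divide_distrib sum_divide_distrib mult.assoc)
    also have "\<dots> = 1 + (\<Sum>i=1..n. complex_of_real (a $ (i-1)) * w ^ i)"
      using z0 pw by (intro arg_cong2[where f="(+)"] sum.cong) auto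
    finally show ?thesis .
  qed
  then show ?thesis using inr by (simp add: regionC_def)
qed

lemma sqnorm_smult: "sqnorm (c \<cdot>\<^sub>v w) = c^2 * sqnorm w"
  by (simp add: sqnorm_def power_mult_distrib sum_distrib_left)

theorem lemma4p4:
  fixes \<tau>0 \<tau>1 \<tau>2 \<alpha> :: real and n :: nat and a :: "real vec"
  assumes "\<tau>0 > 0" and "\<tau>1 > 0" and "\<tau>2 > 0"
    and "0 < \<alpha>" and "\<alpha> \<le> 1"
    and "n \<ge> 1"
    and "a \<in> B_alpha \<tau>0 \<tau>1 \<tau>2 n \<alpha>"
  shows "summable (\<lambda>k. sqnorm (inverse (\<alpha> ^ k) \<cdot>\<^sub>v ((CC a ^\<^sub>m k) *\<^sub>v unit_vec n (n - 1))))
       \<and> (\<Sum>k. sqnorm (inverse (\<alpha> ^ k) \<cdot>\<^sub>v ((CC a ^\<^sub>m k) *\<^sub>v unit_vec n (n - 1))))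
           \<le> 2 * pi * n * \<alpha> powi (- 2 * int n) / \<tau>1\<^sup>2
       \<and> (\<forall>k. sqnorm ((CC a ^\<^sub>m k) *\<^sub>v unit_vec n (n - 1))
           \<le> min (2 * pi * n / \<tau>1\<^sup>2) (2 * pi * n * \<alpha> powi (2 * int k - 2 * int n) / \<tau>1\<^sup>2))"
proof -
  note t1 = assms(2) and al = assms(4) and al1 = assms(5) and n1 = assms(6) and aB = assms(7)
  have dn: "dim_vec a = n" using aB by (simp add: B_alpha_def)
  define R where "R = inverse \<alpha>"
  have R0: "R > 0" using al by (simp add: R_def)
  have R1: "R \<ge> 1" using al al1 by (simp add: R_def one_le_inverse)
  define v where "v k = (CC a ^\<^sub>m k) *\<^sub>v unit_vec n (n - 1)" for k
  define s where "s m = v m $ 0" for m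
  note sq_facts = seq_struct[OF dn[symmetric] v_def s_def n1]
  note vdim = sq_facts(1) and vidx = sq_facts(2) and s0 = sq_facts(3) and srec0 = sq_facts(4)
  have srec: "s (k + n) = - (\<Sum>i=1..n. a $ (i - 1) * s (k + n - i))" for k
  proof -
    have "(\<Sum>j<n. a $ (n - 1 - j) * s (k + j)) = (\<Sum>i=1..n. a $ (i - 1) * s (k + n - i))"
      by (rule sum.reindex_bij_witness[where i="\<lambda>i. n - i" and j="\<lambda>j. n - j"]) auto
    then show ?thesis using srec0[of k] by simp
  qed
  have hP: "\<And>w. cmod w = R \<Longrightarrow> \<tau>1 < Re (1 + (\<Sum>i=1..n. complex_of_real (a $ (i-1)) * w ^ i))"
    using hyp_translate[OF aB al] by (simp add: R_def)
  have core_res: "summable (\<lambda>m. (s m * R^m)^2) \<and> (\<Sum>m. (s m * R^m)^2) \<le> (R^(n-1)/\<tau>1)^2"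
    by (rule core[where c="\<lambda>i. a $ (i - 1)", OF n1 R0 t1 hP s0 srec])
  define b where "b m = (s m * R^m)^2" for m
  define Q where "Q = (\<Sum>m. b m)"
  have summb: "summable b" using core_res by (simp add: b_def[abs_def])
  have Qle: "Q \<le> R^(2*(n-1)) / \<tau>1^2"
    using core_res by (simp add: Q_def b_def[abs_def] power_divide power_mult[symmetric] mult.commute)
  have b0: "b m \<ge> 0" for m by (simp add: b_def)
  have sqv: "sqnorm (v k) = (\<Sum>i<n. (s (k + i))^2)" for k
    by (simp add: sqnorm_def vdim vidx)
  have shift_le: "(\<Sum>k. b (k + i)) \<le> Q" for i
  proof -
    have "Q = (\<Sum>k. b (k + i)) + (\<Sum>m<i. b m)"
      unfolding Q_def by (rule suminf_split_initial_segment[OF summb])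
    then show ?thesis using b0 by (simp add: sum_nonneg)
  qed
  have window: "(\<Sum>i<n. b (k + i)) \<le> Q" for k
  proof -
    have "(\<Sum>i<n. b (k + i)) = sum b ((+) k ` {..<n})"
      by (simp add: sum.reindex o_def)
    also have "\<dots> \<le> Q" unfolding Q_def
      by (rule sum_le_suminf[OF summb]) (auto simp: b0)
    finally show ?thesis .
  qed
  define f where "f k = sqnorm (inverse (\<alpha> ^ k) \<cdot>\<^sub>v v k)" for k
  define g where "g k = (\<Sum>i<n. b (k + i))" for k
  have fg: "f k \<le> g k" for k
  proof -
    have e1: "R^(2*k) = (R^k)^2" by (simp add: power_mult[symmetric] mult.commute)
    have e2: "R^k = inverse (\<alpha>^k)" by (simp add: R_def power_inverse)
    have "f k = (inverse (\<alpha>^k))^2 * (\<Sum>i<n. (s (k + i))^2)"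
      by (simp add: f_def sqnorm_smult sqv)
    also have "\<dots> = (\<Sum>i<n. R^(2*k) * (s (k + i))^2)"
      by (simp add: e1 e2 sum_distrib_left)
    also have "\<dots> \<le> g k" unfolding g_def b_def
    proof (intro sum_mono)
      fix i
      have "R^(2*k) \<le> R^(2*(k+i))" using R1 by (intro power_increasing) auto
      then have "R^(2*k) * (s (k + i))^2 \<le> R^(2*(k+i)) * (s (k + i))^2"
        by (intro mult_right_mono) auto
      then show "R^(2*k) * (s (k + i))^2 \<le> (s (k + i) * R^(k + i))^2"
        by (simp add: power_mult_distrib power_mult[symmetric] mult.commute)
    qed
    finally show ?thesis .
  qed
  have f0: "f k \<ge> 0" for k by (simp add: f_def sqnorm_def sum_nonneg)
  have summg: "summable g" unfolding g_def
    by (intro summable_sum summable_ignore_initial_segment summb)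
  have summf: "summable f"
    by (rule summable_comparison_test[OF _ summg]) (use f0 fg in auto)
  have sumg: "(\<Sum>k. g k) = (\<Sum>i<n. \<Sum>k. b (k + i))" unfolding g_def
    by (rule suminf_sum) (intro summable_ignore_initial_segment summb)
  have "(\<Sum>k. f k) \<le> (\<Sum>k. g k)" by (rule suminf_le[OF fg summf summg])
  also have "\<dots> \<le> (\<Sum>i<n. Q)" unfolding sumg by (intro sum_mono shift_le)
  also have "\<dots> = real n * Q" by simp
  also have "\<dots> \<le> real n * (R^(2*(n-1)) / \<tau>1^2)" by (intro mult_left_mono Qle) auto
  also have "\<dots> \<le> 2 * pi * n * R^(2*n) / \<tau>1^2"
  proof -
    have "R^(2*(n-1)) \<le> R^(2*n)" using R1 by (intro power_increasing) auto
    also have "\<dots> \<le> 2 * pi * R^(2*n)"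
    proof -
      have p: "1 \<le> 2*pi" using pi_gt3 by simp
      show ?thesis using mult_right_mono[OF p, of "R^(2*n)"] R0 by simp
    qed
    finally have "real n * R^(2*(n-1)) \<le> real n * (2 * pi * R^(2*n))" by (intro mult_left_mono) auto
    then have "real n * R^(2*(n-1)) \<le> 2 * pi * n * R^(2*n)" by (simp add: mult_ac)
    then show ?thesis using t1 by (simp add: divide_right_mono)
  qed
  also have "R^(2*n) = \<alpha> powi (- 2 * int n)"
  proof -
    have eq: "- 2 * int n = - int (2 * n)" by simp
    have "\<alpha> powi (- 2 * int n) = \<alpha> powi (- int (2 * n))" by (simp only: eq)
    also have "\<dots> = inverse (\<alpha> ^ (2 * n))" by (simp only: power_int_minus power_int_of_nat)
    also have "\<dots> = R^(2*n)" by (simp add: R_def power_inverse)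
    finally show ?thesis by simp
  qed
  finally have part2: "(\<Sum>k. f k) \<le> 2 * pi * n * \<alpha> powi (- 2 * int n) / \<tau>1\<^sup>2" .
  have p1: "1 \<le> 2*pi*real n"
  proof -
    have "real n \<ge> 1" using n1 by simp
    hence "2*pi*1 \<le> 2*pi*real n" by (intro mult_left_mono) (use pi_gt_zero in auto)
    then show ?thesis using pi_gt3 by linarith
  qed
  have big: "R^(2*(n-1)) / \<tau>1^2 \<le> 2 * pi * n * R^(2*n) / \<tau>1^2"
  proof -
    have "R^(2*(n-1)) \<le> R^(2*n)" using R1 by (intro power_increasing) auto
    also have "\<dots> \<le> 2 * pi * n * R^(2*n)"
    proof -
      have p: "1 \<le> 2*pi*n" by (rule p1)
      show ?thesis using mult_right_mono[OF p, of "R^(2*n)"] R0 by simp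
    qed
    finally show ?thesis using t1 by (simp add: divide_right_mono)
  qed
  have pw: "sqnorm (v k) \<le> min (2*pi*n/\<tau>1^2) (2*pi*n*\<alpha> powi (2*int k - 2*int n)/\<tau>1^2)" for k
  proof -
    have eachA: "R^(2*(n-1)) * (s m)^2 \<le> b m" for m
    proof (cases "m < n - 1")
      case True
      then have "s m = 0" using s0[of m] by auto
      then show ?thesis using b0[of m] by simp
    next
      case False
      then have "R^(2*(n-1)) \<le> R^(2*m)" using R1 by (intro power_increasing) auto
      then have "R^(2*(n-1)) * (s m)^2 \<le> R^(2*m) * (s m)^2" by (intro mult_right_mono) auto
      then show ?thesis by (simp add: b_def power_mult_distrib power_mult[symmetric] mult.commute)
    qed
    have eachB: "R^(2*k) * (s (k+i))^2 \<le> b (k+i)" for i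
    proof -
      have "R^(2*k) \<le> R^(2*(k+i))" using R1 by (intro power_increasing) auto
      then have "R^(2*k) * (s (k + i))^2 \<le> R^(2*(k+i)) * (s (k + i))^2"
        by (intro mult_right_mono) auto
      then show ?thesis by (simp add: b_def power_mult_distrib power_mult[symmetric] mult.commute)
    qed
    have A: "R^(2*(n-1)) * sqnorm (v k) \<le> R^(2*(n-1)) / \<tau>1^2"
    proof -
      have "R^(2*(n-1)) * sqnorm (v k) = (\<Sum>i<n. R^(2*(n-1)) * (s (k+i))^2)"
        by (simp add: sqv sum_distrib_left)
      also have "\<dots> \<le> (\<Sum>i<n. b (k+i))" by (intro sum_mono eachA)
      also have "\<dots> \<le> Q" by (rule window)
      finally show ?thesis using Qle by simp
    qed
    have B: "R^(2*k) * sqnorm (v k) \<le> R^(2*(n-1)) / \<tau>1^2"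
    proof -
      have "R^(2*k) * sqnorm (v k) = (\<Sum>i<n. R^(2*k) * (s (k+i))^2)"
        by (simp add: sqv sum_distrib_left)
      also have "\<dots> \<le> (\<Sum>i<n. b (k+i))" by (intro sum_mono eachB)
      also have "\<dots> \<le> Q" by (rule window)
      finally show ?thesis using Qle by simp
    qed
    have Rp: "R^(2*(n-1)) > 0" "R^(2*k) > 0" using R0 by auto
    have b1: "sqnorm (v k) \<le> 2*pi*n/\<tau>1^2"
    proof -
      have "R^(2*(n-1)) * sqnorm (v k) \<le> R^(2*(n-1)) * (1 / \<tau>1^2)" using A by simp
      then have "sqnorm (v k) \<le> 1 / \<tau>1^2" using Rp(1) by (rule mult_left_le_imp_le)
      also have "\<dots> \<le> 2*pi*n/\<tau>1^2"
      proof -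
        have p: "1 \<le> 2*pi*n" by (rule p1)
        then show ?thesis using t1 by (simp add: divide_right_mono)
      qed
      finally show ?thesis .
    qed
    have ap: "\<alpha> powi (2*int k - 2*int n) = R^(2*n) / R^(2*k)"
    proof -
      have e1: "2 * int k = int (2*k)" "2 * int n = int (2*n)" by simp_all
      have "\<alpha> powi (2*int k - 2*int n) = \<alpha> powi (int (2*k) - int (2*n))" by (simp only: e1)
      also have "\<dots> = \<alpha> powi int (2*k) / \<alpha> powi int (2*n)"
        using al by (intro power_int_diff disjI1) simp
      also have "\<dots> = \<alpha> ^ (2*k) / \<alpha> ^ (2*n)" by (simp only: power_int_of_nat)
      also have "\<dots> = R^(2*n) / R^(2*k)" using al by (simp add: R_def power_inverse field_simps)
      finally show ?thesis .
    qed
    have b2: "sqnorm (v k) \<le> 2*pi*n*\<alpha> powi (2*int k - 2*int n)/\<tau>1^2"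
    proof -
      have "R^(2*k) * sqnorm (v k) \<le> 2 * pi * n * R^(2*n) / \<tau>1^2" using B big by linarith
      also have "\<dots> = R^(2*k) * (2*pi*n*\<alpha> powi (2*int k - 2*int n)/\<tau>1^2)"
        using Rp R0 unfolding ap by (simp add: field_simps)
      finally show ?thesis using Rp(2) by (rule mult_left_le_imp_le)
    qed
    show ?thesis using b1 b2 by simp
  qed
  show ?thesis
    using summf part2 pw by (simp add: f_def[abs_def] v_def)
qed
end
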